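(* Let $V$ be a nonempty finite set, $C$ a partition of $V$, $k>0$, $G=(V,E)$ the clique graph of $C$ with edge weight $k$, and $0<\beta<1$. Let $\epsilon=\min(\beta,1-\beta,1/|V|)/2$. Then for a clustering $D$ of $V$: if $D=C$ then $\sum_{d\in D}\left(\frac{w_d}{v_d}-\beta\right)=(1-\beta)|C|$, while if $D\neq C$ then $\sum_{d\in D}\left(\frac{w_d}{v_d}-\beta\right)<(1-\beta)|C|-\epsilon$.
   Context: A clustering of $V$ is a partition of $V$ into nonempty pairwise disjoint sets. The clique graph of a partition $C$ of $V$ with edge weight $k$ is $G=(V,E)$ with $E(i,j)=k$ if $i$ and $j$ lie in the same block of $C$ (including $i=j$) and $E(i,j)=0$ otherwise. For $d\subseteq V$: $v_d=\sum_{i\in d}\sum_{j\in V}E(i,j)$ and $w_d=\sum_{i,j\in d}E(i,j)$. *)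

theory Defs
  imports Main "HOL-Library.Disjoint_Sets" Complex_Main
begin

definition clustering :: "'a set \<Rightarrow> 'a set set \<Rightarrow> bool" where
  "clustering V C \<longleftrightarrow> (\<forall>c\<in>C. c \<noteq> {}) \<and> disjoint C \<and> \<Union>C = V"

definition clique_graph :: "'a set set \<Rightarrow> real \<Rightarrow> 'a \<Rightarrow> 'a \<Rightarrow> real" where
  "clique_graph C k i j = (if \<exists>c\<in>C. i \<in> c \<and> j \<in> c then k else 0)"

definition vol :: "'a set \<Rightarrow> ('a \<Rightarrow> 'a \<Rightarrow> real) \<Rightarrow> 'a set \<Rightarrow> real" where
  "vol V E d = (\<Sum>i\<in>d. \<Sum>j\<in>V. E i j)"

definition inw :: "('a \<Rightarrow> 'a \<Rightarrow> real) \<Rightarrow> 'a set \<Rightarrow> real" where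
  "inw E d = (\<Sum>i\<in>d. \<Sum>j\<in>d. E i j)"

end

theory Submission
  imports Defs
begin

lemma sum_ind: "finite A \<Longrightarrow> (\<Sum>x\<in>A. if x\<in>c then (a::real) else 0) = a * real (card (A\<inter>c))"
  by (simp add: sum.inter_restrict[symmetric])

lemma E_sum:
  assumes "finite C" "disjoint C"
  shows "clique_graph C k i j = (\<Sum>c\<in>C. if i\<in>c \<and> j\<in>c then k else 0)"
proof (cases "\<exists>c\<in>C. i \<in> c \<and> j \<in> c")
  case True
  then obtain c0 where c0: "c0\<in>C" "i\<in>c0" "j\<in>c0" by blast
  have "(\<Sum>c\<in>C. if i\<in>c \<and> j\<in>c then k else 0) = (\<Sum>c\<in>C. if c = c0 then k else 0)"
    apply (rule sum.cong, simp)
    using c0 assms(2) by (auto simp: disjoint_def)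
  also have "\<dots> = k" using c0 assms(1) by simp
  finally show ?thesis using True by (simp add: clique_graph_def)
next
  case False
  have "(\<Sum>c\<in>C. if i\<in>c \<and> j\<in>c then k else 0) = 0" using False by (intro sum.neutral) auto
  then show ?thesis using False by (auto simp: clique_graph_def)
qed

lemma vol_eq:
  assumes "finite C" "disjoint C" "\<Union>C = V" "finite V" "d \<subseteq> V"
  shows "vol V (clique_graph C k) d = (\<Sum>c\<in>C. k * real (card (d\<inter>c)) * real (card c))"
proof -
  have fd: "finite d" using assms finite_subset by blast
  have "vol V (clique_graph C k) d = (\<Sum>i\<in>d. \<Sum>j\<in>V. \<Sum>c\<in>C. if i\<in>c \<and> j\<in>c then k else 0)"
    unfolding vol_def using E_sum[OF assms(1,2)] by simp
  also have "\<dots> = (\<Sum>i\<in>d. \<Sum>c\<in>C. \<Sum>j\<in>V. if i\<in>c \<and> j\<in>c then k else 0)"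
    by (rule sum.cong[OF refl], rule sum.swap)
  also have "\<dots> = (\<Sum>c\<in>C. \<Sum>i\<in>d. \<Sum>j\<in>V. if i\<in>c \<and> j\<in>c then k else 0)"
    by (rule sum.swap)
  also have "\<dots> = (\<Sum>c\<in>C. k * real (card (d\<inter>c)) * real (card c))"
  proof (rule sum.cong[OF refl])
    fix c assume c: "c \<in> C"
    have cV: "V \<inter> c = c" using c assms(3) by blast
    have "(\<Sum>i\<in>d. \<Sum>j\<in>V. if i\<in>c \<and> j\<in>c then k else 0) = (\<Sum>i\<in>d. if i \<in> c then k * real (card c) else 0)"
    proof (rule sum.cong[OF refl])
      fix i show "(\<Sum>j\<in>V. if i\<in>c \<and> j\<in>c then k else 0) = (if i \<in> c then k * real (card c) else 0)"
        using sum_ind[OF assms(4), of c k] cV by auto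
    qed
    also have "\<dots> = k * real (card (d\<inter>c)) * real (card c)"
      using sum_ind[OF fd, of c "k * real (card c)"] by simp
    finally show "(\<Sum>i\<in>d. \<Sum>j\<in>V. if i\<in>c \<and> j\<in>c then k else 0) = k * real (card (d\<inter>c)) * real (card c)" .
  qed
  finally show ?thesis .
qed

lemma inw_eq:
  assumes "finite C" "disjoint C" "finite d"
  shows "inw (clique_graph C k) d = (\<Sum>c\<in>C. k * real (card (d\<inter>c)) ^ 2)"
proof -
  have "inw (clique_graph C k) d = (\<Sum>i\<in>d. \<Sum>j\<in>d. \<Sum>c\<in>C. if i\<in>c \<and> j\<in>c then k else 0)"
    unfolding inw_def using E_sum[OF assms(1,2)] by simp
  also have "\<dots> = (\<Sum>i\<in>d. \<Sum>c\<in>C. \<Sum>j\<in>d. if i\<in>c \<and> j\<in>c then k else 0)"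
    by (rule sum.cong[OF refl], rule sum.swap)
  also have "\<dots> = (\<Sum>c\<in>C. \<Sum>i\<in>d. \<Sum>j\<in>d. if i\<in>c \<and> j\<in>c then k else 0)"
    by (rule sum.swap)
  also have "\<dots> = (\<Sum>c\<in>C. k * real (card (d\<inter>c)) ^ 2)"
  proof (rule sum.cong[OF refl])
    fix c
    have "(\<Sum>i\<in>d. \<Sum>j\<in>d. if i\<in>c \<and> j\<in>c then k else 0) = (\<Sum>i\<in>d. if i \<in> c then k * real (card (d\<inter>c)) else 0)"
    proof (rule sum.cong[OF refl])
      fix i show "(\<Sum>j\<in>d. if i\<in>c \<and> j\<in>c then k else 0) = (if i \<in> c then k * real (card (d\<inter>c)) else 0)"
        using sum_ind[OF assms(3), of c k] by auto
    qed
    also have "\<dots> = k * real (card (d\<inter>c)) ^ 2"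
      using sum_ind[OF assms(3), of c "k * real (card (d\<inter>c))"] by (simp add: power2_eq_square)
    finally show "(\<Sum>i\<in>d. \<Sum>j\<in>d. if i\<in>c \<and> j\<in>c then k else 0) = k * real (card (d\<inter>c)) ^ 2" .
  qed
  finally show ?thesis .
qed

lemma ratio_bound:
  fixes x n :: "'b \<Rightarrow> real"
  assumes fin: "finite I" and ne: "I \<noteq> {}" and np: "\<And>c. c\<in>I \<Longrightarrow> n c > 0"
    and x0: "\<And>c. c\<in>I \<Longrightarrow> 0 \<le> x c" and xn: "\<And>c. c\<in>I \<Longrightarrow> x c \<le> n c"
  shows "(\<Sum>c\<in>I. x c ^ 2) / (\<Sum>c\<in>I. x c * n c) \<le> 1"
    and "(\<Sum>c\<in>I. x c ^ 2) / (\<Sum>c\<in>I. x c * n c) \<le> (\<Sum>c\<in>I. x c / n c)"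
    and "\<And>c1 c2 N. c1\<in>I \<Longrightarrow> c2\<in>I \<Longrightarrow> c1\<noteq>c2 \<Longrightarrow> x c1 \<ge> 1 \<Longrightarrow> x c2 \<ge> 1 \<Longrightarrow> (\<And>c. c\<in>I \<Longrightarrow> n c \<le> N)
         \<Longrightarrow> (\<Sum>c\<in>I. x c ^ 2) / (\<Sum>c\<in>I. x c * n c) \<le> (\<Sum>c\<in>I. x c / n c) - 1 / N"
proof -
  define r where "r c = x c / n c" for c
  define M where "M = Max (r ` I)"
  have Min: "M \<in> r ` I" unfolding M_def using fin ne by simp
  then obtain c0 where c0: "c0 \<in> I" "M = r c0" by blast
  have rM: "r c \<le> M" if "c\<in>I" for c unfolding M_def using fin that by simp
  have r0: "0 \<le> r c" if "c\<in>I" for c using x0[OF that] np[OF that] by (simp add: r_def)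
  have r1: "r c \<le> 1" if "c\<in>I" for c using xn[OF that] np[OF that] by (simp add: r_def)
  have M0: "0 \<le> M" using r0 c0 by simp
  have M1: "M \<le> 1" using r1 c0 by simp
  have num: "(\<Sum>c\<in>I. x c ^ 2) \<le> M * (\<Sum>c\<in>I. x c * n c)"
    unfolding sum_distrib_left
  proof (rule sum_mono)
    fix c assume c: "c\<in>I"
    have "x c ^ 2 = (x c * n c) * r c" using np[OF c] by (simp add: r_def power2_eq_square)
    also have "\<dots> \<le> (x c * n c) * M" using rM[OF c] x0[OF c] np[OF c]
      by (intro mult_left_mono) auto
    finally show "x c ^ 2 \<le> M * (x c * n c)" by (simp add: mult.commute)
  qed
  have den0: "0 \<le> (\<Sum>c\<in>I. x c * n c)" using x0 np by (intro sum_nonneg) (simp add: less_imp_le)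
  have qM: "(\<Sum>c\<in>I. x c ^ 2) / (\<Sum>c\<in>I. x c * n c) \<le> M"
  proof (cases "(\<Sum>c\<in>I. x c * n c) = 0")
    case True then show ?thesis using M0 by simp
  next
    case False
    then have "0 < (\<Sum>c\<in>I. x c * n c)" using den0 by simp
    then show ?thesis using num by (simp add: pos_divide_le_eq)
  qed
  show "(\<Sum>c\<in>I. x c ^ 2) / (\<Sum>c\<in>I. x c * n c) \<le> 1" using qM M1 by simp
  have Msum: "M \<le> (\<Sum>c\<in>I. x c / n c)"
  proof -
    have "r c0 \<le> sum r I" by (rule member_le_sum[OF c0(1)]) (use r0 fin in auto)
    thus ?thesis using c0 by (simp add: r_def)
  qed
  show "(\<Sum>c\<in>I. x c ^ 2) / (\<Sum>c\<in>I. x c * n c) \<le> (\<Sum>c\<in>I. x c / n c)" using qM Msum by simp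
  fix c1 c2 N assume c1: "c1\<in>I" and c2: "c2\<in>I" and ne12: "c1\<noteq>c2" and x1: "x c1 \<ge> 1" and x2: "x c2 \<ge> 1"
    and nN: "\<And>c. c\<in>I \<Longrightarrow> n c \<le> N"
  obtain c' where c': "c'\<in>I" "c' \<noteq> c0" "x c' \<ge> 1" using c1 c2 ne12 x1 x2 by metis
  have e1: "sum r I = r c0 + sum r (I - {c0})" using fin c0(1) by (rule sum.remove)
  have e2: "sum r (I - {c0}) = r c' + sum r (I - {c0} - {c'})" using fin c' by (intro sum.remove) auto
  have "0 \<le> sum r (I - {c0} - {c'})" using r0 by (intro sum_nonneg) auto
  hence "r c0 + r c' \<le> sum r I" using e1 e2 by linarith
  moreover have "1 / N \<le> r c'"
  proof -
    have "n c' > 0" "n c' \<le> N" using np nN c' by auto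
    then have "1 / N \<le> 1 / n c'" by (simp add: frac_le)
    also have "\<dots> \<le> x c' / n c'" using c' \<open>n c' > 0\<close> by (simp add: divide_right_mono)
    finally show ?thesis by (simp add: r_def)
  qed
  ultimately have "M + 1 / N \<le> sum r I" using c0 by linarith
  hence "M + 1 / N \<le> (\<Sum>c\<in>I. x c / n c)" by (simp add: r_def)
  then show "(\<Sum>c\<in>I. x c ^ 2) / (\<Sum>c\<in>I. x c * n c) \<le> (\<Sum>c\<in>I. x c / n c) - 1 / N" using qM by simp
qed
lemma refine_eq:
  assumes fD: "finite D" and fC: "finite C"
    and cl: "clustering V C" "clustering V D"
    and H: "\<And>d c1 c2. d\<in>D \<Longrightarrow> c1\<in>C \<Longrightarrow> c2\<in>C \<Longrightarrow> d\<inter>c1\<noteq>{} \<Longrightarrow> d\<inter>c2\<noteq>{} \<Longrightarrow> c1=c2"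
    and cd: "card D = card C"
  shows "D = C"
proof -
  have UC: "\<Union>C = V" and UD: "\<Union>D = V" and neD: "\<And>d. d\<in>D \<Longrightarrow> d \<noteq> {}"
    and disD: "disjoint D"
    using cl by (auto simp: clustering_def)
  define f where "f d = (SOME c. c\<in>C \<and> d\<inter>c\<noteq>{})" for d
  have ex: "\<exists>c. c\<in>C \<and> d\<inter>c\<noteq>{}" if dD: "d\<in>D" for d
  proof -
    obtain v where "v\<in>d" using neD[OF dD] by blast
    then have "v \<in> \<Union>C" using UC UD dD by blast
    then show ?thesis using \<open>v\<in>d\<close> by blast
  qed
  have fsp: "f d \<in> C \<and> d \<inter> f d \<noteq> {}" if "d\<in>D" for d
    unfolding f_def using someI_ex[OF ex[OF that]] .
  have funi: "f d = c" if "d\<in>D" "c\<in>C" "d\<inter>c\<noteq>{}" for d c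
    using H[OF that(1) _ that(2)] fsp[OF that(1)] that(3) by blast
  have img: "f ` D = C"
  proof
    show "f ` D \<subseteq> C" using fsp by blast
    show "C \<subseteq> f ` D"
    proof
      fix c assume c: "c\<in>C"
      have "c \<noteq> {}" using cl c by (auto simp: clustering_def)
      then obtain v where "v\<in>c" by blast
      then obtain d where d: "d\<in>D" "v\<in>d" using UC UD c by blast
      then have "f d = c" using funi[OF d(1) c] \<open>v\<in>c\<close> by blast
      then show "c \<in> f ` D" using d by blast
    qed
  qed
  have "card (f ` D) = card D" using img cd by simp
  then have inj: "inj_on f D" by (rule eq_card_imp_inj_on[OF fD])
  have fd: "f d = d" if d: "d\<in>D" for d
  proof
    show "d \<subseteq> f d"
    proof
      fix u assume u: "u\<in>d"
      then obtain c where c: "c\<in>C" "u\<in>c" using UC UD d by blast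
      then have "f d = c" using funi[OF d c(1)] u by blast
      then show "u \<in> f d" using c by simp
    qed
    show "f d \<subseteq> d"
    proof
      fix u assume u: "u \<in> f d"
      have fdC: "f d \<in> C" using fsp[OF d] by blast
      then obtain d' where d': "d'\<in>D" "u\<in>d'" using UC UD u by blast
      then have "f d' = f d" using funi[OF d'(1) fdC] u by blast
      then have "d' = d" using inj d d' by (meson inj_on_def)
      then show "u \<in> d" using d' by simp
    qed
  qed
  have "f ` D = D" using fd by simp
  then show ?thesis using img by simp
qed

theorem lemma2:
  fixes V :: "'a set" and C D :: "'a set set" and k \<beta> :: real
  assumes "finite V" "V \<noteq> {}"
    and "clustering V C" "k > 0" "0 < \<beta>" "\<beta> < 1"
    and "clustering V D"
  defines "E \<equiv> clique_graph C k"
    and "\<epsilon> \<equiv> min (min \<beta> (1 - \<beta>)) (1 / real (card V)) / 2"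
  shows "(D = C \<longrightarrow> (\<Sum>d\<in>D. inw E d / vol V E d - \<beta>) = (1 - \<beta>) * real (card C))
       \<and> (D \<noteq> C \<longrightarrow> (\<Sum>d\<in>D. inw E d / vol V E d - \<beta>) < (1 - \<beta>) * real (card C) - \<epsilon>)"
proof -
  note fV = assms(1)
  have UC: "\<Union>C = V" and UD: "\<Union>D = V" and disC: "disjoint C" and disD: "disjoint D"
    and neC: "\<And>c. c\<in>C \<Longrightarrow> c \<noteq> {}" and neD: "\<And>d. d\<in>D \<Longrightarrow> d \<noteq> {}"
    using assms(3,7) by (auto simp: clustering_def)
  have fC: "finite C" using UC fV finite_UnionD by auto
  have fD: "finite D" using UD fV finite_UnionD by auto
  have cV: "c \<subseteq> V" if "c\<in>C" for c using UC that by blast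
  have dV: "d \<subseteq> V" if "d\<in>D" for d using UD that by blast
  have fc: "finite c" if "c\<in>C" for c using cV[OF that] fV finite_subset by blast
  have fdd: "finite d" if "d\<in>D" for d using dV[OF that] fV finite_subset by blast
  have cpos: "real (card c) > 0" if "c\<in>C" for c using fc[OF that] neC[OF that] by (simp add: card_gt_0_iff)
  have cle: "real (card c) \<le> real (card V)" if "c\<in>C" for c using card_mono[OF fV cV[OF that]] by simp
  have Cne: "C \<noteq> {}" using UC assms(2) by auto
  define x where "x (d::'a set) (c::'a set) = real (card (d \<inter> c))" for d c
  define n where "n (c::'a set) = real (card c)" for c
  define q where "q d = (\<Sum>c\<in>C. x d c ^ 2) / (\<Sum>c\<in>C. x d c * n c)" for d
  have qeq: "inw E d / vol V E d = q d" if "d \<subseteq> V" for d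
  proof -
    have fd: "finite d" using that fV finite_subset by blast
    have "inw E d = k * (\<Sum>c\<in>C. x d c ^ 2)"
      unfolding E_def inw_eq[OF fC disC fd] x_def by (simp add: sum_distrib_left)
    moreover have "vol V E d = k * (\<Sum>c\<in>C. x d c * n c)"
      unfolding E_def vol_eq[OF fC disC UC fV that] x_def n_def by (simp add: sum_distrib_left mult.assoc)
    ultimately show ?thesis unfolding q_def using assms(4) by simp
  qed
  have x0: "0 \<le> x d c" for d c by (simp add: x_def)
  have xn: "x d c \<le> n c" if "c\<in>C" for d c
    unfolding x_def n_def using card_mono[OF fc[OF that], of "d\<inter>c"] by simp
  have cposn: "n c > 0" if "c\<in>C" for c using cpos[OF that] by (simp add: n_def)
  have clen: "n c \<le> real (card V)" if "c\<in>C" for c using cle[OF that] by (simp add: n_def)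
  have x0': "0 \<le> x d c" if "c\<in>C" for d c using x0 .
  have q1: "q d \<le> 1" for d unfolding q_def by (rule ratio_bound(1)[where x="x d" and n=n, OF fC Cne cposn x0' xn])
  have q2: "q d \<le> (\<Sum>c\<in>C. x d c / n c)" for d unfolding q_def by (rule ratio_bound(2)[where x="x d" and n=n, OF fC Cne cposn x0' xn])
  have tot: "(\<Sum>d\<in>D. \<Sum>c\<in>C. x d c / n c) = real (card C)"
  proof -
    have "(\<Sum>d\<in>D. \<Sum>c\<in>C. x d c / n c) = (\<Sum>c\<in>C. (\<Sum>d\<in>D. x d c) / n c)"
      by (subst sum.swap) (simp add: sum_divide_distrib)
    also have "\<dots> = (\<Sum>c\<in>C. 1)"
    proof (rule sum.cong[OF refl])
      fix c assume c: "c\<in>C"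
      have "(\<Union>d\<in>D. d \<inter> c) = c" using UD cV[OF c] by blast
      moreover have "card (\<Union>d\<in>D. d \<inter> c) = (\<Sum>d\<in>D. card (d \<inter> c))"
        apply (rule card_UN_disjoint[OF fD])
        using fdd apply blast
        using disD by (auto simp: disjoint_def)
      ultimately have "(\<Sum>d\<in>D. x d c) = n c" unfolding x_def n_def by simp
      then show "(\<Sum>d\<in>D. x d c) / n c = 1" using cpos[OF c] by (simp add: n_def)
    qed
    finally show ?thesis by simp
  qed
  have sumeq: "(\<Sum>d\<in>D. inw E d / vol V E d - \<beta>) = (\<Sum>d\<in>D. q d) - \<beta> * real (card D)"
    using qeq dV by (simp add: sum_subtractf)
  have exp: "(1 - \<beta>) * real (card C) = real (card C) - \<beta> * real (card C)" by (simp add: algebra_simps)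
  have eb: "\<epsilon> < \<beta>" "\<epsilon> < 1 - \<beta>" "\<epsilon> < 1 / real (card V)"
  proof -
    have cV0: "0 < 1 / real (card V)" using assms(1,2) by (simp add: card_gt_0_iff)
    define m where "m = min (min \<beta> (1 - \<beta>)) (1 / real (card V))"
    have "m \<le> \<beta>" "m \<le> 1 - \<beta>" "m \<le> 1 / real (card V)" unfolding m_def by auto
    moreover have "\<epsilon> = m / 2" unfolding \<epsilon>_def m_def ..
    ultimately show "\<epsilon> < \<beta>" "\<epsilon> < 1 - \<beta>" "\<epsilon> < 1 / real (card V)"
      using cV0 assms(5,6) by linarith+
  qed
  show ?thesis
  proof (intro conjI impI)
    assume DC: "D = C"
    have "q c = 1" if c: "c\<in>C" for c
    proof -
      have xc: "x c c' = (if c' = c then n c else 0)" if "c'\<in>C" for c'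
        using disC c that unfolding x_def n_def disjoint_def by auto
      have "(\<Sum>c'\<in>C. x c c' ^ 2) = (\<Sum>c'\<in>C. if c' = c then n c ^ 2 else 0)"
        by (rule sum.cong) (auto simp: xc)
      also have "\<dots> = n c ^ 2" using c fC by simp
      finally have "(\<Sum>c'\<in>C. x c c' ^ 2) = n c ^ 2" .
      moreover have "(\<Sum>c'\<in>C. x c c' * n c') = (\<Sum>c'\<in>C. if c' = c then n c ^ 2 else 0)"
        by (rule sum.cong) (auto simp: xc power2_eq_square)
      moreover have "(\<Sum>c'\<in>C. if c' = c then n c ^ 2 else 0) = n c ^ 2" using c fC by simp
      ultimately show ?thesis unfolding q_def using cpos[OF c] by (simp add: n_def)
    qed
    then have "(\<Sum>d\<in>D. q d) = real (card C)" using DC by simp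
    then show "(\<Sum>d\<in>D. inw E d / vol V E d - \<beta>) = (1 - \<beta>) * real (card C)"
      using sumeq DC by (simp add: algebra_simps)
  next
    assume DC: "D \<noteq> C"
    have "(\<Sum>d\<in>D. q d) \<le> (\<Sum>d\<in>D. \<Sum>c\<in>C. x d c / n c)" by (rule sum_mono) (rule q2)
    then have S1: "(\<Sum>d\<in>D. q d) \<le> real (card C)" using tot by simp
    have S2: "(\<Sum>d\<in>D. q d) \<le> real (card D)" using q1 sum_bounded_above[of D q 1] by simp
    consider "card D > card C" | "card D < card C" | "card D = card C" by linarith
    then show "(\<Sum>d\<in>D. inw E d / vol V E d - \<beta>) < (1 - \<beta>) * real (card C) - \<epsilon>"
    proof cases
      case 1
      then have "real (card D) \<ge> real (card C) + 1" by simp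
      then have "\<beta> * real (card D) \<ge> \<beta> * (real (card C) + 1)" using assms(5) by (simp add: mult_left_mono)
      then show ?thesis using sumeq S1 eb exp by (simp add: algebra_simps)
    next
      case 2
      then have "real (card D) \<le> real (card C) - 1" by simp
      then have "(1 - \<beta>) * real (card D) \<le> (1 - \<beta>) * (real (card C) - 1)" using assms(6) by (simp add: mult_left_mono)
      then show ?thesis using sumeq S2 eb exp by (simp add: algebra_simps)
    next
      case 3
      have "\<not>(\<forall>d\<in>D. \<forall>c1\<in>C. \<forall>c2\<in>C. d\<inter>c1\<noteq>{} \<longrightarrow> d\<inter>c2\<noteq>{} \<longrightarrow> c1=c2)"
      proof
        assume H: "\<forall>d\<in>D. \<forall>c1\<in>C. \<forall>c2\<in>C. d\<inter>c1\<noteq>{} \<longrightarrow> d\<inter>c2\<noteq>{} \<longrightarrow> c1=c2"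
        have "D = C" by (rule refine_eq[OF fD fC assms(3,7)]) (use H 3 in auto)
        with DC show False by simp
      qed
      then obtain d0 c1 c2 where h: "d0\<in>D" "c1\<in>C" "c2\<in>C" "d0\<inter>c1\<noteq>{}" "d0\<inter>c2\<noteq>{}" "c1\<noteq>c2"
        by blast
      have x1: "x d0 c \<ge> 1" if "c\<in>C" "d0\<inter>c\<noteq>{}" for c
        using that fdd[OF h(1)] unfolding x_def by (simp add: Suc_le_eq card_gt_0_iff)
      have qd0: "q d0 \<le> (\<Sum>c\<in>C. x d0 c / n c) - 1 / real (card V)"
        unfolding q_def
        by (rule ratio_bound(3)[where x="x d0" and n=n, OF fC Cne cposn x0' xn h(2,3,6) x1[OF h(2,4)] x1[OF h(3,5)] clen])
      have "(\<Sum>d\<in>D. q d) = q d0 + (\<Sum>d\<in>D-{d0}. q d)" using fD h(1) by (rule sum.remove)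
      also have "\<dots> \<le> ((\<Sum>c\<in>C. x d0 c / n c) - 1 / real (card V)) + (\<Sum>d\<in>D-{d0}. \<Sum>c\<in>C. x d c / n c)"
        using qd0 q2 by (intro add_mono sum_mono) auto
      also have "\<dots> = real (card C) - 1 / real (card V)"
        using tot sum.remove[OF fD h(1), of "\<lambda>d. \<Sum>c\<in>C. x d c / n c"] by simp
      finally have "(\<Sum>d\<in>D. q d) \<le> real (card C) - 1 / real (card V)" .
      moreover have "\<beta> * real (card D) = \<beta> * real (card C)" using 3 by simp
      ultimately show ?thesis using sumeq eb exp by linarith
    qed
  qed
qed

end
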